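(* For every Lie algebra $\mathfrak{g}$ over a field $\mathbb{F}$ there is a long exact sequence $$0\to\mathrm{H}^2(\mathfrak{g},\mathbb{F})\to\mathrm{H}^1(\mathfrak{g},\mathfrak{g}^* )\to\mathrm{HR}^0(\mathfrak{g})\to\mathrm{H}^3(\mathfrak{g},\mathbb{F})\to\mathrm{H}^2(\mathfrak{g},\mathfrak{g}^* )\to\mathrm{HR}^1(\mathfrak{g})\to\cdots$$ (with general terms $\mathrm{H}^{n+2}(\mathfrak{g},\mathbb{F})\to\mathrm{H}^{n+1}(\mathfrak{g},\mathfrak{g}^* )\to\mathrm{HR}^n(\mathfrak{g})\to\mathrm{H}^{n+3}(\mathfrak{g},\mathbb{F})$) and an isomorphism $\mathrm{H}^1(\mathfrak{g},\mathbb{F})\cong\mathrm{H}^0(\mathfrak{g},\mathfrak{g}^* )$.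
   Context: $\mathrm{H}^\bullet$ denotes Chevalley–Eilenberg cohomology; $\mathbb{F}$ is the trivial module and $\mathfrak{g}^*$ the coadjoint module, $(x\cdot f)(y)=-f([x,y])$. For $k\ge 0$ the map $m^k:\mathrm{C}^{k+1}(\mathfrak{g},\mathbb{F})\to\mathrm{C}^k(\mathfrak{g},\mathfrak{g}^* )$, $(m^kf)(x_1,\dots,x_k)(x)=f(x_1,\dots,x_k,x)$ (dual to exterior multiplication $\Lambda^k\mathfrak{g}\otimes\mathfrak{g}\to\Lambda^{k+1}\mathfrak{g}$), is an injective morphism of cochain complexes from the truncated, shifted complex $\overline{\mathrm{C}}^{\bullet+1}(\mathfrak{g},\mathbb{F})$ (with $\overline{\mathrm{C}}^0=0$, $\overline{\mathrm{C}}^j=\mathrm{C}^j$ for $j>0$) into $\mathrm{C}^\bullet(\mathfrak{g},\mathfrak{g}^* )$. Define the cochain complex $\mathrm{CR}^n(\mathfrak{g}):=\mathrm{C}^{n+1}(\mathfrak{g},\mathfrak{g}^* )/m^{n+1}(\mathrm{C}^{n+2}(\mathfrak{g},\mathbb{F}))$ with the induced differential, and $\mathrm{HR}^n(\mathfrak{g})$ its $n$-th cohomology. *)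

theory Defs
  imports Main "HOL.Vector_Spaces" "HOL-Library.Function_Algebras"
begin

definition lie_algebra :: "('k::field \<Rightarrow> 'g::ab_group_add \<Rightarrow> 'g) \<Rightarrow> ('g \<Rightarrow> 'g \<Rightarrow> 'g) \<Rightarrow> bool" where
  "lie_algebra s br \<longleftrightarrow> vector_space s \<and>
     (\<forall>x y z. br (x + y) z = br x z + br y z) \<and>
     (\<forall>x y z. br x (y + z) = br x y + br x z) \<and>
     (\<forall>a x y. br (s a x) y = s a (br x y)) \<and>
     (\<forall>a x y. br x (s a y) = s a (br x y)) \<and>
     (\<forall>x. br x x = 0) \<and>
     (\<forall>x y z. br x (br y z) + br y (br z x) + br z (br x y) = 0)"

definition del_nth :: "nat \<Rightarrow> 'a list \<Rightarrow> 'a list" where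
  "del_nth i xs = take i xs @ drop (Suc i) xs"

text \<open>Chevalley--Eilenberg k-cochains with values in a module whose underlying space is the
subspace M of the type 'm (scalar multiplication sm): alternating k-multilinear maps,
encoded as functions on argument lists of length k (and 0 on lists of other lengths).\<close>

definition ce_cochains :: "('k::field \<Rightarrow> 'g::ab_group_add \<Rightarrow> 'g) \<Rightarrow> ('k \<Rightarrow> 'm::ab_group_add \<Rightarrow> 'm)
    \<Rightarrow> 'm set \<Rightarrow> nat \<Rightarrow> ('g list \<Rightarrow> 'm) set" where
  "ce_cochains s sm M k = {f.
     (\<forall>xs. length xs \<noteq> k \<longrightarrow> f xs = 0) \<and>
     (\<forall>xs. length xs = k \<longrightarrow> f xs \<in> M) \<and>
     (\<forall>xs i y z. length xs = k \<longrightarrow> i < k \<longrightarrow>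
         f (xs[i := y + z]) = f (xs[i := y]) + f (xs[i := z])) \<and>
     (\<forall>xs i a y. length xs = k \<longrightarrow> i < k \<longrightarrow>
         f (xs[i := s a y]) = sm a (f (xs[i := y]))) \<and>
     (\<forall>xs. length xs = k \<longrightarrow> \<not> distinct xs \<longrightarrow> f xs = 0)}"

definition ce_diff :: "('k::field \<Rightarrow> 'm::ab_group_add \<Rightarrow> 'm) \<Rightarrow> ('g \<Rightarrow> 'm \<Rightarrow> 'm) \<Rightarrow> ('g \<Rightarrow> 'g \<Rightarrow> 'g)
    \<Rightarrow> nat \<Rightarrow> ('g list \<Rightarrow> 'm) \<Rightarrow> 'g list \<Rightarrow> 'm" where
  "ce_diff sm act br k f xs = (if length xs = Suc k then
      (\<Sum>i<Suc k. sm ((-1) ^ i) (act (xs ! i) (f (del_nth i xs))))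
    + (\<Sum>j<Suc k. \<Sum>i<j. sm ((-1) ^ (i + j))
          (f (br (xs ! i) (xs ! j) # del_nth i (del_nth j xs))))
    else 0)"

definition ce_cocycles :: "('k::field \<Rightarrow> 'g::ab_group_add \<Rightarrow> 'g) \<Rightarrow> ('k \<Rightarrow> 'm::ab_group_add \<Rightarrow> 'm)
    \<Rightarrow> ('g \<Rightarrow> 'm \<Rightarrow> 'm) \<Rightarrow> ('g \<Rightarrow> 'g \<Rightarrow> 'g) \<Rightarrow> 'm set \<Rightarrow> nat \<Rightarrow> ('g list \<Rightarrow> 'm) set" where
  "ce_cocycles s sm act br M k = {f \<in> ce_cochains s sm M k. ce_diff sm act br k f = 0}"

definition ce_coboundaries :: "('k::field \<Rightarrow> 'g::ab_group_add \<Rightarrow> 'g) \<Rightarrow> ('k \<Rightarrow> 'm::ab_group_add \<Rightarrow> 'm)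
    \<Rightarrow> ('g \<Rightarrow> 'm \<Rightarrow> 'm) \<Rightarrow> ('g \<Rightarrow> 'g \<Rightarrow> 'g) \<Rightarrow> 'm set \<Rightarrow> nat \<Rightarrow> ('g list \<Rightarrow> 'm) set" where
  "ce_coboundaries s sm act br M k =
     (if k = 0 then {0} else ce_diff sm act br (k - 1) ` ce_cochains s sm M (k - 1))"

definition triv_act :: "'g \<Rightarrow> 'k::field \<Rightarrow> 'k" where
  "triv_act x a = 0"

definition dual_scale :: "'k::field \<Rightarrow> ('g \<Rightarrow> 'k) \<Rightarrow> ('g \<Rightarrow> 'k)" where
  "dual_scale a \<phi> = (\<lambda>y. a * \<phi> y)"

definition coadj_act :: "('g \<Rightarrow> 'g \<Rightarrow> 'g) \<Rightarrow> 'g \<Rightarrow> ('g \<Rightarrow> 'k::field) \<Rightarrow> ('g \<Rightarrow> 'k)" where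
  "coadj_act br x \<phi> = (\<lambda>y. - \<phi> (br x y))"

definition dual_space :: "('k::field \<Rightarrow> 'g::ab_group_add \<Rightarrow> 'g) \<Rightarrow> ('g \<Rightarrow> 'k) set" where
  "dual_space s = {\<phi>. Vector_Spaces.linear s (*) \<phi>}"

abbreviation "C_triv s k \<equiv> ce_cochains s (*) UNIV k"
abbreviation "Z_triv s br k \<equiv> ce_cocycles s (*) triv_act br UNIV k"
abbreviation "B_triv s br k \<equiv> ce_coboundaries s (*) triv_act br UNIV k"
abbreviation "C_coad s k \<equiv> ce_cochains s dual_scale (dual_space s) k"
abbreviation "Z_coad s br k \<equiv> ce_cocycles s dual_scale (coadj_act br) br (dual_space s) k"
abbreviation "B_coad s br k \<equiv> ce_coboundaries s dual_scale (coadj_act br) br (dual_space s) k"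

text \<open>The map m^k : C^(k+1)(g,F) \<rightarrow> C^k(g,g*), (m f)(x_1..x_k)(x) = f(x_1..x_k,x).
(On lists of length \<noteq> k the result is automatically 0.)\<close>

definition m_map :: "('g list \<Rightarrow> 'k) \<Rightarrow> 'g list \<Rightarrow> 'g \<Rightarrow> 'k" where
  "m_map f = (\<lambda>xs x. f (xs @ [x]))"

text \<open>Cohomology of the quotient complex CR^n = C^(n+1)(g,g*) / m(C^(n+2)(g,F)), written on
representatives: HR^n = ZR n / BR n, where ZR n consists of the cochains whose differential
lies in the subcomplex and BR n = B^(n+1)(g,g*) + m(C^(n+2)(g,F)).\<close>

definition set_plus_sp :: "'a::plus set \<Rightarrow> 'a set \<Rightarrow> 'a set" where
  "set_plus_sp A B = {a + b | a b. a \<in> A \<and> b \<in> B}"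

definition ZR :: "('k::field \<Rightarrow> 'g::ab_group_add \<Rightarrow> 'g) \<Rightarrow> ('g \<Rightarrow> 'g \<Rightarrow> 'g) \<Rightarrow> nat
    \<Rightarrow> ('g list \<Rightarrow> 'g \<Rightarrow> 'k) set" where
  "ZR s br n = {f \<in> C_coad s (Suc n).
      ce_diff dual_scale (coadj_act br) br (Suc n) f \<in> m_map ` C_triv s (n + 3)}"

definition BR :: "('k::field \<Rightarrow> 'g::ab_group_add \<Rightarrow> 'g) \<Rightarrow> ('g \<Rightarrow> 'g \<Rightarrow> 'g) \<Rightarrow> nat
    \<Rightarrow> ('g list \<Rightarrow> 'g \<Rightarrow> 'k) set" where
  "BR s br n = set_plus_sp (B_coad s br (Suc n)) (m_map ` C_triv s (n + 2))"

end

theory Submission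
  imports Defs
begin

definition pm :: "nat \<Rightarrow> 'm::ab_group_add \<Rightarrow> 'm" where
  "pm i u = (if even i then u else - u)"

lemma pm_0[simp]: "pm 0 u = u" and pm_Suc[simp]: "pm (Suc i) u = - pm i u"
  by (auto simp: pm_def)
lemma pm_add: "pm i (u + v) = pm i u + pm i v" by (simp add: pm_def)
lemma pm_minus: "pm i (u - v) = pm i u - pm i v" by (simp add: pm_def)
lemma pm_uminus: "pm i (- u) = - pm i u" by (simp add: pm_def)
lemma pm_zero[simp]: "pm i 0 = 0" by (simp add: pm_def)
lemma pm_pm[simp]: "pm i (pm i u) = u" by (simp add: pm_def)
lemma pm_sum: "pm i (sum f A) = (\<Sum>x\<in>A. pm i (f x))"
  by (simp add: pm_def sum_negf)
lemma pm_plus2: "pm (Suc (Suc i)) u = pm i u" by simp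

definition iota :: "'g \<Rightarrow> ('g list \<Rightarrow> 'm) \<Rightarrow> 'g list \<Rightarrow> 'm" where
  "iota x f = (\<lambda>xs. f (x # xs))"

definition Lie :: "('g \<Rightarrow> 'm \<Rightarrow> 'm::ab_group_add) \<Rightarrow> ('g \<Rightarrow> 'g \<Rightarrow> 'g) \<Rightarrow> 'g
   \<Rightarrow> ('g list \<Rightarrow> 'm) \<Rightarrow> 'g list \<Rightarrow> 'm" where
  "Lie act br x f = (\<lambda>xs. act x (f xs) - (\<Sum>j<length xs. f (xs[j := br x (xs ! j)])))"

lemma iota_apply: "iota x f xs = f (x # xs)" by (simp add: iota_def)
lemma iota_plus: "iota x (f + g) = iota x f + iota x g" by (simp add: iota_def fun_eq_iff)
lemma iota_minus: "iota x (f - g) = iota x f - iota x g" by (simp add: iota_def fun_eq_iff)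
lemma iota_zero[simp]: "iota x 0 = 0" by (simp add: iota_def fun_eq_iff)

lemma fun_eq_iota: "F [] = G [] \<Longrightarrow> (\<And>y. iota y F = iota y G) \<Longrightarrow> F = G"
  by (rule ext, case_tac x) (auto simp: iota_def fun_eq_iff)

lemma del_nth_0[simp]: "del_nth 0 (x # xs) = xs"
  and del_nth_Suc[simp]: "del_nth (Suc i) (x # xs) = x # del_nth i xs"
  by (simp_all add: del_nth_def)

lemma length_del_nth[simp]: "i < length xs \<Longrightarrow> length (del_nth i xs) = length xs - 1"
  by (simp add: del_nth_def)

lemma Lie_plus: "(\<And>x u v. act x (u + v) = act x u + act x v) \<Longrightarrow>
   Lie act br x (f + g) = Lie act br x f + Lie act br x g"
  by (simp add: Lie_def fun_eq_iff sum.distrib algebra_simps)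

locale lie_alg =
  fixes s :: "'k::field \<Rightarrow> 'g::ab_group_add \<Rightarrow> 'g" and br :: "'g \<Rightarrow> 'g \<Rightarrow> 'g"
  assumes lie: "lie_algebra s br"
begin
lemma br_ladd: "br (x + y) z = br x z + br y z" using lie by (simp add: lie_algebra_def)
lemma br_radd: "br x (y + z) = br x y + br x z" using lie by (simp add: lie_algebra_def)
lemma br_ls: "br (s a x) y = s a (br x y)" using lie by (simp add: lie_algebra_def)
lemma br_rs: "br x (s a y) = s a (br x y)" using lie by (simp add: lie_algebra_def)
lemma br_self[simp]: "br x x = 0" using lie by (simp add: lie_algebra_def)
lemma jacobi: "br x (br y z) + br y (br z x) + br z (br x y) = 0" using lie by (simp add: lie_algebra_def)
lemma br_0l[simp]: "br 0 y = 0" using br_ladd[of 0 0 y] by simp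
lemma br_0r[simp]: "br x 0 = 0" using br_radd[of x 0 0] by simp
lemma br_neg_l: "br (- x) y = - br x y"
proof -
  have "br x y + br (-x) y = 0" using br_ladd[of x "-x" y] by simp
  from minus_unique[OF this] show ?thesis by simp
qed
lemma br_neg_r: "br x (- y) = - br x y"
proof -
  have "br x y + br x (-y) = 0" using br_radd[of x y "-y"] by simp
  from minus_unique[OF this] show ?thesis by simp
qed
lemma br_lminus: "br (x - y) z = br x z - br y z" using br_ladd[of x "-y" z] by (simp add: br_neg_l)
lemma br_anti: "br x y = - br y x"
proof -
  have "br x y + br y x = br x x + br y x + (br x y + br y y)" by (simp add: add.commute)
  also have "\<dots> = br (x + y) (x + y)" by (simp only: br_ladd br_radd)
  finally have "br x y + br y x = 0" by simp
  from minus_unique[OF this] show ?thesis by (metis minus_minus)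
qed

lemma jac: "br y (br x z) - br x (br y z) = - br (br x y) z"
  using jacobi[of x y z] br_anti[of z "br x y"] br_anti[of z x]
  by (simp add: br_neg_r algebra_simps)

end

locale cemod = lie_alg s br
  for s :: "'k::field \<Rightarrow> 'g::ab_group_add \<Rightarrow> 'g" and br :: "'g \<Rightarrow> 'g \<Rightarrow> 'g" +
  fixes sm :: "'k \<Rightarrow> 'm::ab_group_add \<Rightarrow> 'm" and act :: "'g \<Rightarrow> 'm \<Rightarrow> 'm" and M :: "'m set"
  assumes sm_add: "sm a (u + v) = sm a u + sm a v"
  and sm_ladd: "sm (a + b) u = sm a u + sm b u"
  and sm_mult: "sm a (sm b u) = sm (a * b) u"
  and sm_one: "sm 1 u = u"
  and act_add: "act x (u + v) = act x u + act x v"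
  and act_sm: "act x (sm a u) = sm a (act x u)"
  and act_gadd: "u \<in> M \<Longrightarrow> act (x + y) u = act x u + act y u"
  and act_gs: "u \<in> M \<Longrightarrow> act (s a x) u = sm a (act x u)"
  and act_br: "u \<in> M \<Longrightarrow> act (br x y) u = act x (act y u) - act y (act x u)"
  and act_M: "u \<in> M \<Longrightarrow> act x u \<in> M"
  and M0: "0 \<in> M" and Madd: "u \<in> M \<Longrightarrow> v \<in> M \<Longrightarrow> u + v \<in> M"
  and Msm: "u \<in> M \<Longrightarrow> sm a u \<in> M"
begin

abbreviation "C \<equiv> ce_cochains s sm M"
abbreviation "d \<equiv> ce_diff sm act br"
abbreviation "L \<equiv> Lie act br"

lemma sm_zero[simp]: "sm a 0 = 0" using sm_add[of a 0 0] by simp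
lemma sm_zero_l[simp]: "sm 0 u = 0" using sm_ladd[of 0 0 u] by simp
lemma sm_neg1: "sm (-1) u = - u"
  using sm_ladd[of 1 "-1" u] by (simp add: sm_one eq_neg_iff_add_eq_0 add.commute)
lemma sm_uminus: "sm a (- u) = - sm a u"
proof -
  have "sm a u + sm a (-u) = 0" using sm_add[of a u "-u"] by simp
  from minus_unique[OF this] show ?thesis by simp
qed
lemma sm_minus: "sm a (u - v) = sm a u - sm a v" using sm_add[of a u "-v"] by (simp add: sm_uminus)
lemma sm_sum: "sm a (sum f A) = (\<Sum>x\<in>A. sm a (f x))"
  by (induction A rule: infinite_finite_induct) (auto simp: sm_add)
lemma sm_pm: "sm a (pm i u) = pm i (sm a u)" by (simp add: pm_def sm_uminus)
lemma sm_sign: "sm ((-1) ^ i) u = pm i u"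
proof (induction i)
  case (Suc i)
  have "sm ((-1) ^ Suc i) u = sm (-1) (sm ((-1)^i) u)" by (simp add: sm_mult)
  then show ?case using Suc by (simp add: sm_neg1)
qed (simp add: sm_one)
lemma sm_comm: "sm a (sm b u) = sm b (sm a u)" by (simp add: sm_mult mult.commute)

lemma act_zero[simp]: "act x 0 = 0" using act_add[of x 0 0] by simp
lemma act_uminus: "act x (- u) = - act x u"
proof -
  have "act x u + act x (-u) = 0" using act_add[of x u "-u"] by simp
  from minus_unique[OF this] show ?thesis by simp
qed
lemma act_minus: "act x (u - v) = act x u - act x v" using act_add[of x u "-v"] by (simp add: act_uminus)
lemma act_sum: "act x (sum f A) = (\<Sum>y\<in>A. act x (f y))"
  by (induction A rule: infinite_finite_induct) (auto simp: act_add)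
lemma act_pm: "act x (pm i u) = pm i (act x u)" by (simp add: pm_def act_uminus)

lemma Muminus: "u \<in> M \<Longrightarrow> - u \<in> M" using Msm[of u "-1"] by (simp add: sm_neg1)
lemma Mminus: "u \<in> M \<Longrightarrow> v \<in> M \<Longrightarrow> u - v \<in> M" using Madd[of u "-v"] by (simp add: Muminus)
lemma Msum: "(\<And>x. x \<in> A \<Longrightarrow> f x \<in> M) \<Longrightarrow> sum f A \<in> M"
  by (induction A rule: infinite_finite_induct) (auto simp: M0 Madd)
lemma Mpm: "u \<in> M \<Longrightarrow> pm i u \<in> M" by (simp add: pm_def Muminus)

lemma d_eq: "d k f xs = (if length xs = Suc k then
      (\<Sum>i<Suc k. pm i (act (xs ! i) (f (del_nth i xs))))
    + (\<Sum>j<Suc k. \<Sum>i<j. pm (i + j) (f (br (xs ! i) (xs ! j) # del_nth i (del_nth j xs))))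
    else 0)"
  by (simp add: ce_diff_def sm_sign)

lemma d_Nil[simp]: "d k f [] = 0" by (simp add: d_eq)
lemma d_len: "length xs \<noteq> Suc k \<Longrightarrow> d k f xs = 0" by (simp add: d_eq)

lemma d_plus: "d k (f + g) = d k f + d k g"
  by (rule ext) (simp add: d_eq sum.distrib pm_add act_add algebra_simps)
lemma d_uminus: "d k (- f) = - d k f"
  by (rule ext) (simp add: d_eq sum_negf pm_uminus act_uminus)
lemma d_minus: "d k (f - g) = d k f - d k g"
  using d_plus[of k f "-g"] by (simp add: d_uminus)
lemma d_zero[simp]: "d k 0 = 0"
  using d_minus[of k 0 0] by simp
lemma d_sm: "d k (\<lambda>xs. sm a (f xs)) = (\<lambda>xs. sm a (d k f xs))"
  by (rule ext) (simp add: d_eq sm_add sm_sum sm_pm act_sm)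

lemma L_plus: "L x (f + g) = L x f + L x g" by (rule Lie_plus) (rule act_add)
lemma L_uminus: "L x (- f) = - L x f"
  by (simp add: Lie_def fun_eq_iff sum_negf act_uminus)
lemma L_minus: "L x (f - g) = L x f - L x g"
  using L_plus[of x f "-g"] by (simp add: L_uminus)
lemma L_zero[simp]: "L x 0 = 0" using L_minus[of x 0 0] by simp
lemma L_Nil: "L x f [] = act x (f [])" by (simp add: Lie_def)

lemma iota_L: "iota y (L x f) = L x (iota y f) - iota (br x y) f"
  by (simp add: Lie_def iota_def fun_eq_iff sum.lessThan_Suc_shift del: sum.lessThan_Suc)

lemma nondist: "i < length xs \<Longrightarrow> j < length xs \<Longrightarrow> i \<noteq> j \<Longrightarrow> xs ! i = xs ! j \<Longrightarrow> \<not> distinct xs"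
  by (metis nth_eq_iff_index_eq)

lemma C_len: "f \<in> C k \<Longrightarrow> length xs \<noteq> k \<Longrightarrow> f xs = 0" by (simp add: ce_cochains_def)
lemma C_M: "f \<in> C k \<Longrightarrow> f xs \<in> M" by (cases "length xs = k") (auto simp: ce_cochains_def M0)
lemma C_add: "f \<in> C k \<Longrightarrow> i < length xs \<Longrightarrow> f (xs[i := y + z]) = f (xs[i := y]) + f (xs[i := z])"
  by (cases "length xs = k") (auto simp: ce_cochains_def)
lemma C_sm: "f \<in> C k \<Longrightarrow> i < length xs \<Longrightarrow> f (xs[i := s a y]) = sm a (f (xs[i := y]))"
  by (cases "length xs = k") (auto simp: ce_cochains_def)
lemma C_alt: "f \<in> C k \<Longrightarrow> \<not> distinct xs \<Longrightarrow> f xs = 0"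
  by (cases "length xs = k") (auto simp: ce_cochains_def)
lemma C_upd0: "f \<in> C k \<Longrightarrow> i < length xs \<Longrightarrow> f (xs[i := 0]) = 0"
  using C_add[of f k i xs 0 0] by simp
lemma C_upd_neg: "f \<in> C k \<Longrightarrow> i < length xs \<Longrightarrow> f (xs[i := - y]) = - f (xs[i := y])"
proof -
  assume a: "f \<in> C k" "i < length xs"
  have "f (xs[i := y]) + f (xs[i := - y]) = 0" using C_add[OF a, of y "-y"] C_upd0[OF a] by simp
  from minus_unique[OF this] show ?thesis by simp
qed
lemma C_upd_minus: "f \<in> C k \<Longrightarrow> i < length xs \<Longrightarrow> f (xs[i := y - z]) = f (xs[i := y]) - f (xs[i := z])"
  using C_add[of f k i xs y "-z"] C_upd_neg[of f k i xs z] by simp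

lemma C_swap: assumes f: "f \<in> C k" and ij: "i < length xs" "j < length xs" "i \<noteq> j"
  shows "f (xs[i := u, j := v]) = - f (xs[i := v, j := u])"
proof -
  have nd: "\<And>w ys. length ys = length xs \<Longrightarrow> f (ys[i := w, j := w]) = 0"
    using ij by (intro C_alt[OF f] nondist[of i _ j]) auto
  have 0: "0 = f (xs[i := u + v, j := u + v])" using nd by simp
  also have "\<dots> = f (xs[i := u + v, j := u]) + f (xs[i := u + v, j := v])"
    using C_add[OF f, of j "xs[i := u + v]"] ij by simp
  also have "f (xs[i := u + v, j := u]) = f (xs[j := u, i := u + v])" using ij by (simp add: list_update_swap)
  also have "\<dots> = f (xs[j := u, i := u]) + f (xs[j := u, i := v])"
    using C_add[OF f, of i "xs[j := u]"] ij by simp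
  also have "f (xs[j := u, i := u]) = 0" using nd[of "xs" u] ij by (simp add: list_update_swap)
  also have "f (xs[i := u + v, j := v]) = f (xs[j := v, i := u + v])" using ij by (simp add: list_update_swap)
  also have "\<dots> = f (xs[j := v, i := u]) + f (xs[j := v, i := v])"
    using C_add[OF f, of i "xs[j := v]"] ij by simp
  also have "f (xs[j := v, i := v]) = 0" using nd[of "xs" v] ij by (simp add: list_update_swap)
  finally have "f (xs[j := u, i := v]) + f (xs[j := v, i := u]) = 0" by (simp add: algebra_simps)
  moreover have "xs[j := u, i := v] = xs[i := v, j := u]" "xs[j := v, i := u] = xs[i := u, j := v]"
    using ij by (simp_all add: list_update_swap)
  ultimately have "f (xs[i := v, j := u]) + f (xs[i := u, j := v]) = 0" by simp
  from minus_unique[OF this] show ?thesis by (metis minus_minus)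
qed

lemma C_cons_add: "f \<in> C k \<Longrightarrow> f ((y + z) # r) = f (y # r) + f (z # r)"
  using C_add[of f k 0 "y # r" y z] by simp
lemma C_cons_sm: "f \<in> C k \<Longrightarrow> f (s a y # r) = sm a (f (y # r))"
  using C_sm[of f k 0 "y # r" a y] by simp
lemma C_cons_zero: "f \<in> C k \<Longrightarrow> f (0 # r) = 0"
  using C_upd0[of f k 0 "y # r"] by simp
lemma C_cons_neg: "f \<in> C k \<Longrightarrow> f ((- y) # r) = - f (y # r)"
  using C_upd_neg[of f k 0 "y # r" y] by simp
lemma C_cons_minus: "f \<in> C k \<Longrightarrow> f ((y - z) # r) = f (y # r) - f (z # r)"
  using C_upd_minus[of f k 0 "y # r" y z] by simp
lemma C_swap01: "f \<in> C k \<Longrightarrow> f (a # b # r) = - f (b # a # r)"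
  using C_swap[of f k 0 "a # b # r" 1 a b] by simp

lemma zero_C: "0 \<in> C k" by (simp add: ce_cochains_def M0)
lemma plus_C: "f \<in> C k \<Longrightarrow> g \<in> C k \<Longrightarrow> f + g \<in> C k"
  by (simp add: ce_cochains_def Madd sm_add algebra_simps)
lemma uminus_C: "f \<in> C k \<Longrightarrow> - f \<in> C k"
  by (simp add: ce_cochains_def Muminus sm_uminus algebra_simps)
lemma minus_C: "f \<in> C k \<Longrightarrow> g \<in> C k \<Longrightarrow> f - g \<in> C k"
  using plus_C[of f k "- g"] uminus_C[of g k] by simp
lemma smul_C: "f \<in> C k \<Longrightarrow> (\<lambda>xs. sm a (f xs)) \<in> C k"
  by (simp add: ce_cochains_def Msm sm_add sm_comm)

lemma iota_C0: "f \<in> C 0 \<Longrightarrow> iota x f = 0"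
  by (rule ext) (simp add: iota_def C_len)
lemma iota_C: assumes f: "f \<in> C k" shows "iota x f \<in> C (k - 1)"
proof (cases k)
  case 0 then show ?thesis using f by (simp add: iota_C0 zero_C)
next
  case (Suc k')
  have add: "iota x f (xs[i := y + z]) = iota x f (xs[i := y]) + iota x f (xs[i := z])"
    if "i < length xs" for xs i y z using C_add[OF f, of "Suc i" "x # xs" y z] that by (simp add: iota_def)
  have sc: "iota x f (xs[i := s a y]) = sm a (iota x f (xs[i := y]))"
    if "i < length xs" for xs i a y using C_sm[OF f, of "Suc i" "x # xs" a y] that by (simp add: iota_def)
  show ?thesis unfolding ce_cochains_def mem_Collect_eq
  proof (intro conjI allI impI)
    fix xs :: "'g list" assume "length xs \<noteq> k - 1"
    then show "iota x f xs = 0" using Suc by (simp add: iota_def C_len[OF f])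
  next
    fix xs :: "'g list" show "iota x f xs \<in> M" by (simp add: iota_def C_M[OF f])
  next
    fix xs :: "'g list" and i y z assume "length xs = k - 1" "i < k - 1"
    then show "iota x f (xs[i := y + z]) = iota x f (xs[i := y]) + iota x f (xs[i := z])"
      by (intro add) simp
  next
    fix xs :: "'g list" and i a y assume "length xs = k - 1" "i < k - 1"
    then show "iota x f (xs[i := s a y]) = sm a (iota x f (xs[i := y]))"
      by (intro sc) simp
  next
    fix xs :: "'g list" assume "\<not> distinct xs"
    then show "iota x f xs = 0" by (simp add: iota_def C_alt[OF f])
  qed
qed
lemma iota_gadd: "f \<in> C k \<Longrightarrow> iota (x + y) f = iota x f + iota y f"
  by (rule ext) (simp add: iota_def C_cons_add)
lemma iota_gs: "f \<in> C k \<Longrightarrow> iota (s a x) f = (\<lambda>xs. sm a (iota x f xs))"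
  by (rule ext) (simp add: iota_def C_cons_sm)
lemma iota_g0: "f \<in> C k \<Longrightarrow> iota 0 f = 0"
  by (rule ext) (simp add: iota_def C_cons_zero)
lemma iota_gneg: "f \<in> C k \<Longrightarrow> iota (- x) f = - iota x f"
  by (rule ext) (simp add: iota_def C_cons_neg)
lemma iota_gminus: "f \<in> C k \<Longrightarrow> iota (x - y) f = iota x f - iota y f"
  by (rule ext) (simp add: iota_def C_cons_minus)
lemma iota_same: "f \<in> C k \<Longrightarrow> iota a (iota a f) = 0"
  by (rule ext) (simp add: iota_def C_alt)

lemma move: "f \<in> C k \<Longrightarrow> j < length xs \<Longrightarrow> f (y # del_nth j xs) = pm j (f (xs[j := y]))"
proof (induction j arbitrary: xs k f)
  case 0
  then obtain a r where "xs = a # r" by (cases xs) auto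
  then show ?case by simp
next
  case (Suc j)
  then obtain a r where xs: "xs = a # r" and j: "j < length r" by (cases xs) auto
  have "f (y # del_nth (Suc j) xs) = f (y # a # del_nth j r)" by (simp add: xs)
  also have "\<dots> = - iota a f (y # del_nth j r)" using C_swap01[OF Suc.prems(1), of y a] by (simp add: iota_def)
  also have "iota a f (y # del_nth j r) = pm j (iota a f (r[j := y]))"
    using Suc.IH[OF iota_C[OF Suc.prems(1)] j] .
  finally show ?case by (simp add: xs iota_def)
qed

lemma L_len: "f \<in> C k \<Longrightarrow> length xs \<noteq> k \<Longrightarrow> L x f xs = 0"
  by (simp add: Lie_def C_len)

lemma L_upd_add: assumes f: "f \<in> C k" and ij: "i < length xs" "j < length xs"
  shows "f ((xs[i := y + z])[j := br x (xs[i := y + z] ! j)])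
       = f ((xs[i := y])[j := br x (xs[i := y] ! j)]) + f ((xs[i := z])[j := br x (xs[i := z] ! j)])"
proof (cases "i = j")
  case True then show ?thesis using ij by (simp add: br_radd C_add[OF f])
next
  case False
  then have "\<And>w c. (xs[i := w])[j := c] = (xs[j := c])[i := w]" by (simp add: list_update_swap)
  then show ?thesis using False ij by (simp add: C_add[OF f])
qed

lemma L_upd_sm: assumes f: "f \<in> C k" and ij: "i < length xs" "j < length xs"
  shows "f ((xs[i := s a y])[j := br x (xs[i := s a y] ! j)]) = sm a (f ((xs[i := y])[j := br x (xs[i := y] ! j)]))"
proof (cases "i = j")
  case True then show ?thesis using ij by (simp add: br_rs C_sm[OF f])
next
  case False
  then have "\<And>w c. (xs[i := w])[j := c] = (xs[j := c])[i := w]" by (simp add: list_update_swap)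
  then show ?thesis using False ij by (simp add: C_sm[OF f])
qed

lemma L_alt: assumes f: "f \<in> C k" and nd: "\<not> distinct xs" shows "L x f xs = 0"
proof -
  obtain a b where ab: "a < length xs" "b < length xs" "a \<noteq> b" "xs ! a = xs ! b"
    using nd by (auto simp: distinct_conv_nth)
  define g where "g j = f (xs[j := br x (xs ! j)])" for j
  have g0: "g j = 0" if "j < length xs" "j \<notin> {a, b}" for j
    unfolding g_def using that ab by (intro C_alt[OF f] nondist[of a _ b]) auto
  have "(\<Sum>j<length xs. g j) = (\<Sum>j\<in>{a, b}. g j)"
    by (rule sum.mono_neutral_right) (use ab g0 in auto)
  also have "\<dots> = g a + g b" using ab by simp
  also have "g a + g b = 0"
  proof -
    have "f (xs[a := br x (xs ! a), b := xs ! a]) = - f (xs[a := xs ! a, b := br x (xs ! a)])"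
      using C_swap[OF f ab(1,2,3)] .
    moreover have "xs[a := br x (xs ! a), b := xs ! a] = xs[a := br x (xs ! a)]"
      using ab by (metis list_update_id list_update_swap)
    moreover have "xs[a := xs ! a, b := br x (xs ! a)] = xs[b := br x (xs ! b)]"
      using ab by (metis list_update_id)
    ultimately show ?thesis unfolding g_def using ab by simp
  qed
  finally show ?thesis by (simp add: Lie_def g_def C_alt[OF f nd])
qed

lemma L_C: assumes f: "f \<in> C k" shows "L x f \<in> C k"
  unfolding ce_cochains_def mem_Collect_eq
proof (intro conjI allI impI)
  fix xs :: "'g list" assume "length xs \<noteq> k"
  then show "L x f xs = 0" by (rule L_len[OF f])
next
  fix xs :: "'g list" show "L x f xs \<in> M"
    by (simp add: Lie_def Mminus act_M C_M[OF f] Msum)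
next
  fix xs :: "'g list" and i y z assume "length xs = k" "i < k"
  then show "L x f (xs[i := y + z]) = L x f (xs[i := y]) + L x f (xs[i := z])"
    by (simp add: Lie_def C_add[OF f] act_add L_upd_add[OF f] sum.distrib algebra_simps)
next
  fix xs :: "'g list" and i a y assume "length xs = k" "i < k"
  then show "L x f (xs[i := s a y]) = sm a (L x f (xs[i := y]))"
    by (simp add: Lie_def C_sm[OF f] act_sm L_upd_sm[OF f] sm_sum sm_minus)
next
  fix xs :: "'g list" assume "\<not> distinct xs"
  then show "L x f xs = 0" by (rule L_alt[OF f])
qed

lemma L_gadd: assumes f: "f \<in> C k" shows "L (x + y) f = L x f + L y f"
proof (rule ext)
  fix xs
  have "\<And>j. j < length xs \<Longrightarrow> f (xs[j := br (x + y) (xs ! j)]) = f (xs[j := br x (xs ! j)]) + f (xs[j := br y (xs ! j)])"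
    by (simp add: br_ladd C_add[OF f])
  then show "L (x + y) f xs = (L x f + L y f) xs"
    by (simp add: Lie_def act_gadd[OF C_M[OF f]] sum.distrib algebra_simps)
qed
lemma L_gs: assumes f: "f \<in> C k" shows "L (s a x) f = (\<lambda>xs. sm a (L x f xs))"
proof (rule ext)
  fix xs
  have "\<And>j. j < length xs \<Longrightarrow> f (xs[j := br (s a x) (xs ! j)]) = sm a (f (xs[j := br x (xs ! j)]))"
    by (simp add: br_ls C_sm[OF f])
  then show "L (s a x) f xs = sm a (L x f xs)"
    by (simp add: Lie_def act_gs[OF C_M[OF f]] sm_sum sm_minus)
qed

lemma double_shift: "(\<Sum>j<Suc n. \<Sum>i<j. g i j :: 'a::comm_monoid_add)
    = (\<Sum>j<n. g 0 (Suc j)) + (\<Sum>j<n. \<Sum>i<j. g (Suc i) (Suc j))"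
  by (simp only: sum.lessThan_Suc_shift sum.distrib) simp

lemma cartan_Suc: assumes f: "f \<in> C (Suc k)" shows "iota x (d (Suc k) f) = L x f - d k (iota x f)"
proof (rule ext)
  fix xs
  show "iota x (d (Suc k) f) xs = (L x f - d k (iota x f)) xs"
  proof (cases "length xs = Suc k")
    case False
    then show ?thesis by (simp add: iota_def d_len L_len[OF f])
  next
    case True
    define n where "n = Suc k"
    have mv: "\<And>j. j \<in> {..<n} \<Longrightarrow> f (br x (xs!j) # del_nth j xs) = pm j (f (xs[j := br x (xs!j)]))"
      using move[OF f] True n_def by auto
    have sw: "\<And>a r. f (a # x # r) = - f (x # a # r)" using C_swap01[OF f] by blast
    have lhs: "d (Suc k) f (x # xs) = (\<Sum>i<Suc n. pm i (act ((x#xs)!i) (f (del_nth i (x#xs)))))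
       + (\<Sum>j<Suc n. \<Sum>i<j. pm (i + j) (f (br ((x#xs) ! i) ((x#xs) ! j) # del_nth i (del_nth j (x#xs)))))"
      unfolding d_eq n_def using True by simp
    also have "\<dots> = act x (f xs) + (\<Sum>i<n. - pm i (act (xs!i) (f (x # del_nth i xs))))
       + ((\<Sum>j<n. - pm j (f (br x (xs!j) # del_nth j xs)))
          + (\<Sum>j<n. \<Sum>i<j. pm (i + j) (f (br (xs ! i) (xs ! j) # x # del_nth i (del_nth j xs)))))"
      by (simp only: double_shift sum.lessThan_Suc_shift) simp
    also have "(\<Sum>j<n. - pm j (f (br x (xs!j) # del_nth j xs))) = - (\<Sum>j<n. f (xs[j := br x (xs!j)]))"
      unfolding sum_negf[symmetric] by (rule sum.cong) (simp_all add: mv)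
    also have "(\<Sum>j<n. \<Sum>i<j. pm (i + j) (f (br (xs ! i) (xs ! j) # x # del_nth i (del_nth j xs))))
       = - (\<Sum>j<n. \<Sum>i<j. pm (i + j) (f (x # br (xs ! i) (xs ! j) # del_nth i (del_nth j xs))))"
      by (simp add: sw sum_negf pm_uminus)
    finally have A: "d (Suc k) f (x # xs) = act x (f xs) - (\<Sum>i<n. pm i (act (xs!i) (f (x # del_nth i xs))))
       - (\<Sum>j<n. f (xs[j := br x (xs!j)]))
       - (\<Sum>j<n. \<Sum>i<j. pm (i + j) (f (x # br (xs ! i) (xs ! j) # del_nth i (del_nth j xs))))"
      by (simp add: sum_negf algebra_simps)
    have R: "d k (iota x f) xs = (\<Sum>i<n. pm i (act (xs!i) (f (x # del_nth i xs))))
       + (\<Sum>j<n. \<Sum>i<j. pm (i + j) (f (x # br (xs ! i) (xs ! j) # del_nth i (del_nth j xs))))"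
      by (subst d_eq) (simp add: True n_def iota_def)
    have Lx: "L x f xs = act x (f xs) - (\<Sum>j<n. f (xs[j := br x (xs!j)]))"
      by (simp add: Lie_def True n_def)
    show ?thesis unfolding minus_apply iota_apply[of x "d (Suc k) f"] A R Lx by (simp add: algebra_simps)
  qed
qed

lemma cartan_0: assumes f: "f \<in> C 0" shows "iota x (d 0 f) = L x f"
proof (rule ext)
  fix xs show "iota x (d 0 f) xs = L x f xs"
  proof (cases xs)
    case Nil then show ?thesis by (simp add: iota_def d_eq Lie_def)
  next
    case (Cons a r) then show ?thesis by (simp add: iota_def d_len L_len[OF f])
  qed
qed

lemma cartan: assumes f: "f \<in> C k" shows "iota x (d k f) = L x f - d (k - 1) (iota x f)"
proof (cases k)
  case 0 then show ?thesis using f cartan_0 iota_C0 by simp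
next
  case (Suc k') then show ?thesis using f cartan_Suc by simp
qed

lemma charC:
  assumes z: "\<And>xs. length xs \<noteq> Suc k \<Longrightarrow> F xs = 0"
  and io: "\<And>x. iota x F \<in> C k"
  and ad: "\<And>x y r. F ((x + y) # r) = F (x # r) + F (y # r)"
  and sc: "\<And>a x r. F (s a x # r) = sm a (F (x # r))"
  and aa: "\<And>a r. F (a # a # r) = 0"
  shows "F \<in> C (Suc k)"
proof -
  have sw: "F (a # b # r) = - F (b # a # r)" for a b r
  proof -
    have "0 = F ((a + b) # (a + b) # r)" using aa by simp
    also have "\<dots> = F (a # (a + b) # r) + F (b # (a + b) # r)" by (simp add: ad)
    also have "F (a # (a + b) # r) = F (a # a # r) + F (a # b # r)"
      using C_cons_add[OF io[of a], of a b r] by (simp add: iota_def)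
    also have "F (b # (a + b) # r) = F (b # a # r) + F (b # b # r)"
      using C_cons_add[OF io[of b], of a b r] by (simp add: iota_def)
    finally have "F (a # b # r) + F (b # a # r) = 0" by (simp add: aa)
    from minus_unique[OF this] show ?thesis by (metis minus_minus)
  qed
  show ?thesis unfolding ce_cochains_def mem_Collect_eq
  proof (intro conjI allI impI)
    fix xs :: "'g list" assume "length xs \<noteq> Suc k" then show "F xs = 0" by (rule z)
  next
    fix xs :: "'g list" assume "length xs = Suc k"
    then obtain x r where "xs = x # r" by (cases xs) auto
    then show "F xs \<in> M" using C_M[OF io[of x], of r] by (simp add: iota_def)
  next
    fix xs :: "'g list" and i y z assume "length xs = Suc k" "i < Suc k"
    then obtain x r where xs: "xs = x # r" by (cases xs) auto
    show "F (xs[i := y + z]) = F (xs[i := y]) + F (xs[i := z])"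
    proof (cases i)
      case 0 then show ?thesis by (simp add: xs ad)
    next
      case (Suc i')
      then have "i' < length r" using xs \<open>i < Suc k\<close> \<open>length xs = Suc k\<close> by simp
      then show ?thesis using C_add[OF io[of x], of i' r y z] by (simp add: xs Suc iota_def)
    qed
  next
    fix xs :: "'g list" and i a y assume "length xs = Suc k" "i < Suc k"
    then obtain x r where xs: "xs = x # r" by (cases xs) auto
    show "F (xs[i := s a y]) = sm a (F (xs[i := y]))"
    proof (cases i)
      case 0 then show ?thesis by (simp add: xs sc)
    next
      case (Suc i')
      then have "i' < length r" using xs \<open>i < Suc k\<close> \<open>length xs = Suc k\<close> by simp
      then show ?thesis using C_sm[OF io[of x], of i' r a y] by (simp add: xs Suc iota_def)
    qed
  next
    fix xs :: "'g list" assume nd: "\<not> distinct xs"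
    show "F xs = 0"
    proof (cases xs)
      case Nil then show ?thesis using nd by simp
    next
      case (Cons x r)
      show ?thesis
      proof (cases "distinct r")
        case False
        then show ?thesis using C_alt[OF io[of x] False] by (simp add: Cons iota_def)
      next
        case True
        then have xr: "x \<in> set r" using nd Cons by simp
        then obtain b r' where r: "r = b # r'" by (cases r) auto
        show ?thesis
        proof (cases "x = b")
          case True then show ?thesis by (simp add: Cons r aa)
        next
          case False
          then have "\<not> distinct (x # r')" using xr r by simp
          then have "iota b F (x # r') = 0" by (rule C_alt[OF io])
          then show ?thesis by (simp add: Cons r sw[of x b r'] iota_def)
        qed
      qed
    qed
  qed
qed

lemma dC: "f \<in> C k \<Longrightarrow> d k f \<in> C (Suc k)"
proof (induction k arbitrary: f)
  case 0
  have f: "f \<in> C 0" by fact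
  show ?case
  proof (rule charC)
    show "d 0 f xs = 0" if "length xs \<noteq> Suc 0" for xs using that by (rule d_len)
    show "iota x (d 0 f) \<in> C 0" for x using cartan_0[OF f] L_C[OF f] by simp
    show "d 0 f ((x + y) # r) = d 0 f (x # r) + d 0 f (y # r)" for x y r
      using cartan_0[OF f, of "x + y"] cartan_0[OF f, of x] cartan_0[OF f, of y] L_gadd[OF f, of x y]
      by (simp add: iota_def fun_eq_iff)
    show "d 0 f (s a x # r) = sm a (d 0 f (x # r))" for a x r
      using cartan_0[OF f, of "s a x"] cartan_0[OF f, of x] L_gs[OF f, of a x]
      by (simp add: iota_def fun_eq_iff)
    show "d 0 f (a # a # r) = 0" for a r by (simp add: d_len)
  qed
next
  case (Suc k)
  have f: "f \<in> C (Suc k)" by fact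
  have io: "iota x f \<in> C k" for x using iota_C[OF f] by simp
  show ?case
  proof (rule charC)
    show "d (Suc k) f xs = 0" if "length xs \<noteq> Suc (Suc k)" for xs using that by (rule d_len)
    show "iota x (d (Suc k) f) \<in> C (Suc k)" for x
      using cartan_Suc[OF f] by (simp add: minus_C L_C[OF f] Suc.IH[OF io])
    show "d (Suc k) f ((x + y) # r) = d (Suc k) f (x # r) + d (Suc k) f (y # r)" for x y r
    proof -
      have "d (Suc k) f ((x + y) # r) = iota (x + y) (d (Suc k) f) r" by (simp add: iota_def)
      also have "\<dots> = (L x f + L y f - (d k (iota x f) + d k (iota y f))) r"
        by (simp add: cartan_Suc[OF f] L_gadd[OF f] iota_gadd[OF f] d_plus)
      also have "\<dots> = iota x (d (Suc k) f) r + iota y (d (Suc k) f) r"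
        by (simp add: cartan_Suc[OF f])
      finally show ?thesis by (simp add: iota_def)
    qed
    show "d (Suc k) f (s a x # r) = sm a (d (Suc k) f (x # r))" for a x r
    proof -
      have "d (Suc k) f (s a x # r) = iota (s a x) (d (Suc k) f) r" by (simp add: iota_def)
      also have "\<dots> = sm a (L x f r) - sm a (d k (iota x f) r)"
        by (simp add: cartan_Suc[OF f] L_gs[OF f] iota_gs[OF f] d_sm)
      also have "\<dots> = sm a (iota x (d (Suc k) f) r)"
        by (simp add: cartan_Suc[OF f] sm_minus)
      finally show ?thesis by (simp add: iota_def)
    qed
    show "d (Suc k) f (a # a # r) = 0" for a r
    proof -
      have "d (Suc k) f (a # a # r) = iota a (iota a (d (Suc k) f)) r" by (simp add: iota_def)
      also have "\<dots> = (iota a (L a f) - iota a (d k (iota a f))) r"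
        by (simp add: cartan_Suc[OF f] iota_minus)
      also have "iota a (L a f) = L a (iota a f)" by (simp add: iota_L iota_g0[OF f])
      also have "iota a (d k (iota a f)) = L a (iota a f)"
        using cartan[OF io[of a], of a] by (simp add: iota_same[OF f])
      finally show ?thesis by simp
    qed
  qed
qed

lemma LL: "f \<in> C k \<Longrightarrow> L x (L y f) - L y (L x f) = L (br x y) f"
proof (induction k arbitrary: f x y)
  case 0
  have f: "f \<in> C 0" by fact
  show ?case
  proof (rule fun_eq_iota)
    show "(L x (L y f) - L y (L x f)) [] = L (br x y) f []"
      by (simp add: L_Nil act_br[OF C_M[OF f]])
    fix z
    show "iota z (L x (L y f) - L y (L x f)) = iota z (L (br x y) f)"
      by (simp add: iota_minus iota_L iota_C0[OF f] iota_C0[OF L_C[OF f]])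
  qed
next
  case (Suc k)
  have f: "f \<in> C (Suc k)" by fact
  have io: "iota z f \<in> C k" for z using iota_C[OF f] by simp
  show ?case
  proof (rule fun_eq_iota)
    show "(L x (L y f) - L y (L x f)) [] = L (br x y) f []"
      by (simp add: L_Nil act_br[OF C_M[OF f]])
    fix z
    have jac: "br y (br x z) - br x (br y z) = - br (br x y) z"
      using jacobi[of x y z] br_anti[of z "br x y"] br_anti[of z x]
      by (simp add: br_neg_r algebra_simps)
    have "iota z (L x (L y f) - L y (L x f))
        = (L x (L y (iota z f)) - L y (L x (iota z f))) + (iota (br y (br x z)) f - iota (br x (br y z)) f)"
      by (simp add: iota_minus iota_L L_minus algebra_simps)
    also have "iota (br y (br x z)) f - iota (br x (br y z)) f = - iota (br (br x y) z) f"
      by (simp add: iota_gminus[OF f, symmetric] jac iota_gneg[OF f])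
    also have "L x (L y (iota z f)) - L y (L x (iota z f)) = L (br x y) (iota z f)"
      by (rule Suc.IH[OF io])
    finally show "iota z (L x (L y f) - L y (L x f)) = iota z (L (br x y) f)"
      by (simp only: iota_L diff_conv_add_uminus)
  qed
qed

lemma Ld: "f \<in> C k \<Longrightarrow> L x (d k f) = d k (L x f)"
proof (induction k arbitrary: f x)
  case 0
  have f: "f \<in> C 0" by fact
  show ?case
  proof (rule fun_eq_iota)
    show "L x (d 0 f) [] = d 0 (L x f) []" by (simp add: L_Nil)
    fix y
    have e1: "iota y (L x (d 0 f)) = L x (L y f) - L (br x y) f"
      by (simp add: iota_L cartan_0[OF f])
    have e2: "iota y (d 0 (L x f)) = L y (L x f)" by (rule cartan_0[OF L_C[OF f]])
    show "iota y (L x (d 0 f)) = iota y (d 0 (L x f))"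
      using LL[OF f, of x y] unfolding e1 e2 by (simp add: algebra_simps)
  qed
next
  case (Suc k)
  have f: "f \<in> C (Suc k)" by fact
  have io: "iota z f \<in> C k" for z using iota_C[OF f] by simp
  show ?case
  proof (rule fun_eq_iota)
    show "L x (d (Suc k) f) [] = d (Suc k) (L x f) []" by (simp add: L_Nil)
    fix y
    have e1: "iota y (L x (d (Suc k) f)) = L x (L y f) - L x (d k (iota y f)) - (L (br x y) f - d k (iota (br x y) f))"
      by (simp add: iota_L cartan_Suc[OF f] L_minus)
    have e2: "iota y (d (Suc k) (L x f)) = L y (L x f) - (d k (L x (iota y f)) - d k (iota (br x y) f))"
      by (simp add: cartan_Suc[OF L_C[OF f]] iota_L d_minus)
    have e3: "L x (d k (iota y f)) = d k (L x (iota y f))" by (rule Suc.IH[OF io])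
    show "iota y (L x (d (Suc k) f)) = iota y (d (Suc k) (L x f))"
      using LL[OF f, of x y] unfolding e1 e2 e3 by (simp add: algebra_simps)
  qed
qed

lemma dd: "f \<in> C k \<Longrightarrow> d (Suc k) (d k f) = 0"
proof (induction k arbitrary: f)
  case 0
  have f: "f \<in> C 0" by fact
  show ?case
  proof (rule fun_eq_iota)
    show "d (Suc 0) (d 0 f) [] = 0 []" by simp
    fix y
    have "iota y (d (Suc 0) (d 0 f)) = L y (d 0 f) - d 0 (iota y (d 0 f))"
      by (rule cartan_Suc[OF dC[OF f]])
    also have "\<dots> = 0" by (simp add: cartan_0[OF f] Ld[OF f])
    finally show "iota y (d (Suc 0) (d 0 f)) = iota y 0" by simp
  qed
next
  case (Suc k)
  have f: "f \<in> C (Suc k)" by fact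
  have io: "iota z f \<in> C k" for z using iota_C[OF f] by simp
  show ?case
  proof (rule fun_eq_iota)
    show "d (Suc (Suc k)) (d (Suc k) f) [] = 0 []" by simp
    fix y
    have "iota y (d (Suc (Suc k)) (d (Suc k) f)) = L y (d (Suc k) f) - d (Suc k) (iota y (d (Suc k) f))"
      by (rule cartan_Suc[OF dC[OF f]])
    also have "\<dots> = 0" by (simp add: cartan_Suc[OF f] Ld[OF f] d_minus Suc.IH[OF io] zero_fun_def)
    finally show "iota y (d (Suc (Suc k)) (d (Suc k) f)) = iota y 0" by simp
  qed
qed

end

lemma vs_field: "vector_space ((*) :: 'k::field \<Rightarrow> 'k \<Rightarrow> 'k)"
  unfolding vector_space_def module_def by (simp add: algebra_simps)

lemma sum_fun_apply: "(sum F A) y = (\<Sum>j\<in>A. F j y)"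
  by (induction A rule: infinite_finite_induct) auto

context lie_alg begin

lemma vs: "vector_space s" using lie by (simp add: lie_algebra_def)

lemma dual_space_iff: "\<phi> \<in> dual_space s \<longleftrightarrow> (\<forall>x y. \<phi> (x + y) = \<phi> x + \<phi> y) \<and> (\<forall>a x. \<phi> (s a x) = a * \<phi> x)"
  by (simp add: dual_space_def linear_iff vs vs_field)

lemma dual_add: "\<phi> \<in> dual_space s \<Longrightarrow> \<phi> (x + y) = \<phi> x + \<phi> y" by (simp add: dual_space_iff)
lemma dual_s: "\<phi> \<in> dual_space s \<Longrightarrow> \<phi> (s a x) = a * \<phi> x" by (simp add: dual_space_iff)
lemma dual_neg: "\<phi> \<in> dual_space s \<Longrightarrow> \<phi> (- x) = - \<phi> x"
  using dual_add[of \<phi> x "-x"] dual_add[of \<phi> 0 0] by (simp add: eq_neg_iff_add_eq_0)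
lemma dual_minus: "\<phi> \<in> dual_space s \<Longrightarrow> \<phi> (x - y) = \<phi> x - \<phi> y"
  using dual_add[of \<phi> x "-y"] dual_neg[of \<phi> y] by simp

end

sublocale lie_alg \<subseteq> T: cemod s br "(*)" triv_act UNIV
  by unfold_locales (simp_all add: triv_act_def algebra_simps)

sublocale lie_alg \<subseteq> Co: cemod s br dual_scale "coadj_act br" "dual_space s"
proof unfold_locales
  fix u :: "'g \<Rightarrow> 'k" and x y a
  assume u: "u \<in> dual_space s"
  show "coadj_act br (x + y) u = coadj_act br x u + coadj_act br y u"
    using u by (simp add: coadj_act_def fun_eq_iff br_ladd dual_add)
  show "coadj_act br (s a x) u = dual_scale a (coadj_act br x u)"
    using u by (simp add: coadj_act_def dual_scale_def fun_eq_iff br_ls dual_s)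
  show "coadj_act br (br x y) u = coadj_act br x (coadj_act br y u) - coadj_act br y (coadj_act br x u)"
  proof -
    have "\<And>z. - u (br (br x y) z) = u (br y (br x z)) - u (br x (br y z))"
      using u by (simp add: dual_minus[symmetric] jac dual_neg)
    then show ?thesis by (simp add: coadj_act_def fun_eq_iff)
  qed
  have ua: "u (p + q) = u p + u q" and us: "u (s c p) = c * u p" for p q c
    using u by (simp_all add: dual_space_iff)
  show "coadj_act br x u \<in> dual_space s"
    unfolding dual_space_iff coadj_act_def by (simp add: br_radd br_rs ua us)
next
  show "0 \<in> dual_space s" by (simp add: dual_space_iff)
next
  fix u v :: "'g \<Rightarrow> 'k" and a
  assume u: "u \<in> dual_space s"
  show "v \<in> dual_space s \<Longrightarrow> u + v \<in> dual_space s" using u by (simp add: dual_space_iff distrib_left)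
  show "dual_scale a u \<in> dual_space s" using u by (simp add: dual_space_iff dual_scale_def algebra_simps)
qed (simp_all add: dual_scale_def coadj_act_def fun_eq_iff algebra_simps)

context lie_alg begin

lemma T_d0: "T.d 0 g = 0"
  by (rule ext) (simp add: T.d_eq triv_act_def)

lemma m_plus: "m_map (f + g) = m_map f + m_map g" by (simp add: m_map_def fun_eq_iff)
lemma m_minus: "m_map (f - g) = m_map f - m_map g" by (simp add: m_map_def fun_eq_iff)
lemma m_zero[simp]: "m_map 0 = 0" by (simp add: m_map_def fun_eq_iff)
lemma m_iota: "iota x (m_map f) = m_map (iota x f)" by (simp add: m_map_def iota_def)
lemma m_Nil: "m_map F [] = (\<lambda>x. F [x])" by (simp add: m_map_def)

lemma m_inj: assumes "F [] = 0" "m_map F = 0" shows "F = 0"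
proof (rule ext)
  fix ys show "F ys = 0 ys"
  proof (cases ys rule: rev_exhaust)
    case Nil then show ?thesis using assms by simp
  next
    case (snoc xs x)
    have "m_map F xs x = 0" using assms by simp
    then show ?thesis by (simp add: snoc m_map_def)
  qed
qed

lemma m_C: assumes f: "f \<in> T.C (Suc k)" shows "m_map f \<in> Co.C k"
  unfolding ce_cochains_def mem_Collect_eq
proof (intro conjI allI impI)
  fix xs :: "'g list" assume "length xs \<noteq> k"
  then show "m_map f xs = 0" by (simp add: m_map_def fun_eq_iff T.C_len[OF f])
next
  fix xs :: "'g list" assume l: "length xs = k"
  have "f ((xs @ [x + y])) = f (xs @ [x]) + f (xs @ [y])" for x y
    using T.C_add[OF f, of "length xs" "xs @ [x]" x y] by simp
  moreover have "f ((xs @ [s a x])) = a * f (xs @ [x])" for a x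
    using T.C_sm[OF f, of "length xs" "xs @ [x]" a x] by simp
  ultimately show "m_map f xs \<in> dual_space s" by (simp add: dual_space_iff m_map_def)
next
  fix xs :: "'g list" and i y z assume "length xs = k" "i < k"
  then show "m_map f (xs[i := y + z]) = m_map f (xs[i := y]) + m_map f (xs[i := z])"
    using T.C_add[OF f, of i "xs @ [_]"] by (simp add: m_map_def fun_eq_iff list_update_append1)
next
  fix xs :: "'g list" and i a y assume "length xs = k" "i < k"
  then show "m_map f (xs[i := s a y]) = dual_scale a (m_map f (xs[i := y]))"
    using T.C_sm[OF f, of i "xs @ [_]"] by (simp add: m_map_def fun_eq_iff list_update_append1 dual_scale_def)
next
  fix xs :: "'g list" assume "\<not> distinct xs"
  then show "m_map f xs = 0" by (simp add: m_map_def fun_eq_iff T.C_alt[OF f])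
qed

lemma m_L: "m_map (T.L x f) = Co.L x (m_map f)"
proof (intro ext)
  fix xs y
  have A: "T.L x f (xs @ [y]) = - (\<Sum>j<length xs. f (xs[j := br x (xs ! j)] @ [y])) - f (xs @ [br x y])"
    by (simp add: Lie_def triv_act_def nth_append list_update_append1)
  have B: "Co.L x (m_map f) xs y = - f (xs @ [br x y]) - (\<Sum>j<length xs. f (xs[j := br x (xs ! j)] @ [y]))"
    by (simp add: Lie_def coadj_act_def m_map_def sum_fun_apply)
  have e: "m_map (T.L x f) xs y = T.L x f (xs @ [y])" by (simp add: m_map_def)
  show "m_map (T.L x f) xs y = Co.L x (m_map f) xs y"
    unfolding e A B by (simp add: algebra_simps)
qed

lemma m_d: "f \<in> T.C (Suc k) \<Longrightarrow> m_map (T.d (Suc k) f) = Co.d k (m_map f)"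
proof (induction k arbitrary: f)
  case 0
  have f: "f \<in> T.C (Suc 0)" by fact
  show ?case
  proof (rule fun_eq_iota)
    show "m_map (T.d (Suc 0) f) [] = Co.d 0 (m_map f) []" by (simp add: m_Nil T.d_len zero_fun_def)
    fix x
    show "iota x (m_map (T.d (Suc 0) f)) = iota x (Co.d 0 (m_map f))"
      by (simp add: m_iota T.cartan_Suc[OF f] Co.cartan_0[OF m_C[OF f]] T_d0 m_L)
  qed
next
  case (Suc k)
  have f: "f \<in> T.C (Suc (Suc k))" by fact
  have io: "iota z f \<in> T.C (Suc k)" for z using T.iota_C[OF f] by simp
  show ?case
  proof (rule fun_eq_iota)
    show "m_map (T.d (Suc (Suc k)) f) [] = Co.d (Suc k) (m_map f) []" by (simp add: m_Nil T.d_len zero_fun_def)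
    fix x
    show "iota x (m_map (T.d (Suc (Suc k)) f)) = iota x (Co.d (Suc k) (m_map f))"
      by (simp add: m_iota T.cartan_Suc[OF f] Co.cartan_Suc[OF m_C[OF f]] m_minus m_L Suc.IH[OF io])
  qed
qed

lemma sp_iff: "x \<in> set_plus_sp A B \<longleftrightarrow> (\<exists>a\<in>A. \<exists>b\<in>B. x = a + b)"
  by (auto simp: set_plus_sp_def)

lemma Bc_Suc: "B_coad s br (Suc n) = Co.d n ` Co.C n" by (simp add: ce_coboundaries_def)
lemma Bt_Suc: "B_triv s br (Suc n) = T.d n ` T.C n" by (simp add: ce_coboundaries_def)
lemma Bc_0: "B_coad s br 0 = {0}" by (simp add: ce_coboundaries_def)
lemma Zc_iff: "f \<in> Z_coad s br k \<longleftrightarrow> f \<in> Co.C k \<and> Co.d k f = 0" by (simp add: ce_cocycles_def)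
lemma Zt_iff: "f \<in> Z_triv s br k \<longleftrightarrow> f \<in> T.C k \<and> T.d k f = 0" by (simp add: ce_cocycles_def)
lemma ZR_iff: "f \<in> ZR s br n \<longleftrightarrow> f \<in> Co.C (Suc n) \<and> (\<exists>g \<in> T.C (Suc (Suc (Suc n))). Co.d (Suc n) f = m_map g)"
  by (auto simp: ZR_def numeral_3_eq_3)
lemma BR_iff: "f \<in> BR s br n \<longleftrightarrow> (\<exists>h \<in> Co.C n. \<exists>c \<in> T.C (Suc (Suc n)). f = Co.d n h + m_map c)"
  by (auto simp: BR_def sp_iff Bc_Suc numeral_2_eq_2)

definition delta :: "nat \<Rightarrow> ('g list \<Rightarrow> 'g \<Rightarrow> 'k) \<Rightarrow> ('g list \<Rightarrow> 'k)" where
  "delta n f = (\<lambda>ys. if ys = [] then 0 else Co.d (Suc n) f (butlast ys) (last ys))"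

lemma delta_eq: assumes "Co.d (Suc n) f = m_map g" "g [] = 0" shows "delta n f = g"
proof (rule ext)
  fix ys show "delta n f ys = g ys"
  proof (cases "ys = []")
    case True then show ?thesis using assms by (simp add: delta_def)
  next
    case False
    then have "g ys = m_map g (butlast ys) (last ys)" by (simp add: m_map_def)
    then show ?thesis using False assms by (simp add: delta_def)
  qed
qed

lemma delta_plus: "delta n (f + g) = delta n f + delta n g"
  by (simp add: delta_def fun_eq_iff Co.d_plus)
lemma delta_minus: "delta n (f - g) = delta n f - delta n g"
  by (simp add: delta_def fun_eq_iff Co.d_minus)
lemma delta_scale: "delta n (\<lambda>xs y. a * x xs y) = (\<lambda>xs. a * delta n x xs)"
proof -
  have e: "(\<lambda>xs y. a * x xs y) = (\<lambda>xs. dual_scale a (x xs))" by (simp add: dual_scale_def)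
  show ?thesis unfolding e delta_def Co.d_sm by (simp add: dual_scale_def fun_eq_iff)
qed

lemma m_surj0: assumes h: "h \<in> Co.C 0" shows "\<exists>c \<in> T.C (Suc 0). m_map c = h"
proof
  define c where "c = (\<lambda>xs :: 'g list. if length xs = 1 then h [] (hd xs) else 0)"
  have phi: "h [] \<in> dual_space s" by (rule Co.C_M[OF h])
  show "m_map c = h"
  proof (intro ext)
    fix xs y show "m_map c xs y = h xs y"
      by (cases xs) (simp_all add: m_map_def c_def Co.C_len[OF h])
  qed
  show "c \<in> T.C (Suc 0)"
    unfolding ce_cochains_def mem_Collect_eq
  proof (intro conjI allI impI)
    fix xs :: "'g list" assume "length xs \<noteq> Suc 0" then show "c xs = 0" by (simp add: c_def)
  next
    fix xs :: "'g list" show "c xs \<in> UNIV" by simp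
  next
    fix xs :: "'g list" and i y z assume l: "length xs = Suc 0" "i < Suc 0"
    then obtain x where "xs = [x]" "i = 0" by (cases xs) auto
    then show "c (xs[i := y + z]) = c (xs[i := y]) + c (xs[i := z])"
      by (simp add: c_def dual_add[OF phi])
  next
    fix xs :: "'g list" and i a y assume "length xs = Suc 0" "i < Suc 0"
    then obtain x where "xs = [x]" "i = 0" by (cases xs) auto
    then show "c (xs[i := s a y]) = a * c (xs[i := y])"
      by (simp add: c_def dual_s[OF phi])
  next
    fix xs :: "'g list" assume nd: "\<not> distinct xs"
    show "c xs = 0"
    proof (cases "length xs = 1")
      case True
      then obtain x where "xs = [x]" by (cases xs) auto
      then show ?thesis using nd by simp
    qed (simp add: c_def)
  qed
qed

lemma delta_ZR: assumes "f \<in> ZR s br n"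
  shows "delta n f \<in> T.C (Suc (Suc (Suc n)))" "T.d (Suc (Suc (Suc n))) (delta n f) = 0"
    "Co.d (Suc n) f = m_map (delta n f)"
proof -
  obtain g where f: "f \<in> Co.C (Suc n)" and g: "g \<in> T.C (Suc (Suc (Suc n)))" and e: "Co.d (Suc n) f = m_map g"
    using assms by (auto simp: ZR_iff)
  have dg: "delta n f = g" by (rule delta_eq[OF e T.C_len[OF g]]) simp
  show "delta n f \<in> T.C (Suc (Suc (Suc n)))" using g dg by simp
  show "Co.d (Suc n) f = m_map (delta n f)" using e dg by simp
  have "m_map (T.d (Suc (Suc (Suc n))) g) = Co.d (Suc (Suc n)) (Co.d (Suc n) f)"
    using m_d[OF g] e by simp
  also have "\<dots> = 0" by (rule Co.dd[OF f])
  finally have A: "m_map (T.d (Suc (Suc (Suc n))) g) = 0" .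
  have "T.d (Suc (Suc (Suc n))) g = 0" by (rule m_inj) (simp_all add: A)
  then show "T.d (Suc (Suc (Suc n))) (delta n f) = 0" using dg by simp
qed

lemma delta_mc: assumes h: "h \<in> Co.C n" and c: "c \<in> T.C (Suc (Suc n))"
  shows "delta n (Co.d n h + m_map c) = T.d (Suc (Suc n)) c"
proof (rule delta_eq)
  show "Co.d (Suc n) (Co.d n h + m_map c) = m_map (T.d (Suc (Suc n)) c)"
    by (simp add: Co.d_plus Co.dd[OF h] m_d[OF c])
qed simp

lemma P1c: "delta n ` ZR s br n \<subseteq> Z_triv s br (n + 3)"
proof -
  have e: "n + 3 = Suc (Suc (Suc n))" by simp
  show ?thesis unfolding e by (auto simp: Zt_iff delta_ZR)
qed

lemma P1d: "delta n ` BR s br n \<subseteq> B_triv s br (n + 3)"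
proof
  have e: "n + 3 = Suc (Suc (Suc n))" by simp
  fix z assume "z \<in> delta n ` BR s br n"
  then obtain h c where h: "h \<in> Co.C n" and c: "c \<in> T.C (Suc (Suc n))" and z: "z = delta n (Co.d n h + m_map c)"
    by (auto simp: BR_iff)
  have "z = T.d (Suc (Suc n)) c" using z delta_mc[OF h c] by simp
  then show "z \<in> B_triv s br (n + 3)" unfolding e Bt_Suc using c by simp
qed

lemma P2: "{z \<in> Z_triv s br 2. m_map z \<in> B_coad s br 1} = B_triv s br 2"
  unfolding numeral_2_eq_2 One_nat_def Bt_Suc Bc_Suc
proof (intro set_eqI iffI)
  fix z assume "z \<in> {z \<in> Z_triv s br (Suc (Suc 0)). m_map z \<in> Co.d 0 ` Co.C 0}"
  then obtain h where z: "z \<in> T.C (Suc (Suc 0))" and h: "h \<in> Co.C 0" and e: "m_map z = Co.d 0 h"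
    by (auto simp: Zt_iff)
  obtain c where c: "c \<in> T.C (Suc 0)" and mc: "m_map c = h" using m_surj0[OF h] by blast
  have "m_map (T.d (Suc 0) c - z) = 0" using m_d[OF c] mc e by (simp add: m_minus)
  then have "T.d (Suc 0) c - z = 0" by (intro m_inj[of "T.d (Suc 0) c - z"]) (simp_all add: T.C_len[OF z])
  then have "z = T.d (Suc 0) c" by simp
  then show "z \<in> T.d (Suc 0) ` T.C (Suc 0)" using c by simp
next
  fix z assume "z \<in> T.d (Suc 0) ` T.C (Suc 0)"
  then obtain c where c: "c \<in> T.C (Suc 0)" and z: "z = T.d (Suc 0) c" by auto
  show "z \<in> {z \<in> Z_triv s br (Suc (Suc 0)). m_map z \<in> Co.d 0 ` Co.C 0}"
    using z T.dC[OF c] T.dd[OF c] m_d[OF c] m_C[OF c] by (simp add: Zt_iff)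
qed

lemma P3: "{z \<in> Z_coad s br (n + 1). z \<in> BR s br n} = set_plus_sp (m_map ` Z_triv s br (n + 2)) (B_coad s br (n + 1))"
proof -
  have e: "n + 2 = Suc (Suc n)" "n + 1 = Suc n" by simp_all
  show ?thesis unfolding e
  proof (intro set_eqI iffI)
    fix z assume "z \<in> {z \<in> Z_coad s br (Suc n). z \<in> BR s br n}"
    then obtain h c where z0: "Co.d (Suc n) z = 0" and h: "h \<in> Co.C n" and c: "c \<in> T.C (Suc (Suc n))"
      and z: "z = Co.d n h + m_map c" by (auto simp: Zc_iff BR_iff)
    have "m_map (T.d (Suc (Suc n)) c) = 0" using z0 z m_d[OF c] by (simp add: Co.d_plus Co.dd[OF h])
    then have "T.d (Suc (Suc n)) c = 0" by (intro m_inj[of "T.d (Suc (Suc n)) c"]) simp_all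
    then have "c \<in> Z_triv s br (Suc (Suc n))" using c by (simp add: Zt_iff)
    then show "z \<in> set_plus_sp (m_map ` Z_triv s br (Suc (Suc n))) (B_coad s br (Suc n))"
      unfolding sp_iff Bc_Suc using z h by (auto simp: add.commute)
  next
    fix z assume "z \<in> set_plus_sp (m_map ` Z_triv s br (Suc (Suc n))) (B_coad s br (Suc n))"
    then obtain h c where h: "h \<in> Co.C n" and c: "c \<in> T.C (Suc (Suc n))" and c0: "T.d (Suc (Suc n)) c = 0"
      and z: "z = m_map c + Co.d n h" unfolding sp_iff Bc_Suc by (auto simp: Zt_iff)
    have zC: "z \<in> Co.C (Suc n)" using z Co.plus_C[OF m_C[OF c] Co.dC[OF h]] by simp
    have "Co.d (Suc n) z = 0" using z m_d[OF c] c0 by (simp add: Co.d_plus Co.dd[OF h])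
    moreover have "z \<in> BR s br n" unfolding BR_iff using h c z by (auto simp: add.commute)
    ultimately show "z \<in> {z \<in> Z_coad s br (Suc n). z \<in> BR s br n}" using zC by (simp add: Zc_iff)
  qed
qed

lemma P4: "{z \<in> ZR s br n. delta n z \<in> B_triv s br (n + 3)} = set_plus_sp (Z_coad s br (n + 1)) (BR s br n)"
proof -
  have e: "n + 3 = Suc (Suc (Suc n))" "n + 1 = Suc n" by simp_all
  show ?thesis unfolding e
  proof (intro set_eqI iffI)
    fix z assume "z \<in> {z \<in> ZR s br n. delta n z \<in> B_triv s br (Suc (Suc (Suc n)))}"
    then have zR: "z \<in> ZR s br n" and "delta n z \<in> T.d (Suc (Suc n)) ` T.C (Suc (Suc n))"
      by (auto simp: Bt_Suc)
    then obtain c where c: "c \<in> T.C (Suc (Suc n))" and dz: "delta n z = T.d (Suc (Suc n)) c" by auto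
    have zC: "z \<in> Co.C (Suc n)" using zR by (simp add: ZR_iff)
    have "Co.d (Suc n) z = Co.d (Suc n) (m_map c)" using delta_ZR(3)[OF zR] dz m_d[OF c] by simp
    then have w0: "Co.d (Suc n) (z - m_map c) = 0" by (simp add: Co.d_minus)
    have wC: "z - m_map c \<in> Co.C (Suc n)" by (rule Co.minus_C[OF zC m_C[OF c]])
    have b: "m_map c \<in> BR s br n" unfolding BR_iff
      by (rule bexI[of _ 0], rule bexI[of _ c]) (simp_all add: c Co.zero_C)
    have "z - m_map c \<in> Z_coad s br (Suc n)" using w0 wC by (simp add: Zc_iff)
    then show "z \<in> set_plus_sp (Z_coad s br (Suc n)) (BR s br n)"
      unfolding sp_iff using b by (metis diff_add_cancel)
  next
    fix z assume "z \<in> set_plus_sp (Z_coad s br (Suc n)) (BR s br n)"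
    then obtain w h c where w: "w \<in> Co.C (Suc n)" "Co.d (Suc n) w = 0" and h: "h \<in> Co.C n"
      and c: "c \<in> T.C (Suc (Suc n))" and z: "z = w + (Co.d n h + m_map c)"
      unfolding sp_iff Bex_def BR_iff Zc_iff by blast
    have zC: "z \<in> Co.C (Suc n)" using z Co.plus_C[OF w(1) Co.plus_C[OF Co.dC[OF h] m_C[OF c]]] by simp
    have dz: "Co.d (Suc n) z = m_map (T.d (Suc (Suc n)) c)"
      using z w(2) m_d[OF c] by (simp add: Co.d_plus Co.dd[OF h])
    have zR: "z \<in> ZR s br n" unfolding ZR_iff using zC dz T.dC[OF c] by blast
    have "delta n z = T.d (Suc (Suc n)) c" by (rule delta_eq[OF dz]) simp
    then have "delta n z \<in> B_triv s br (Suc (Suc (Suc n)))" using c by (simp add: Bt_Suc)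
    then show "z \<in> {z \<in> ZR s br n. delta n z \<in> B_triv s br (Suc (Suc (Suc n)))}" using zR by simp
  qed
qed

lemma P5: "{z \<in> Z_triv s br (n + 3). m_map z \<in> B_coad s br (n + 2)} = set_plus_sp (delta n ` ZR s br n) (B_triv s br (n + 3))"
proof -
  have e: "n + 3 = Suc (Suc (Suc n))" "n + 2 = Suc (Suc n)" by simp_all
  show ?thesis unfolding e
  proof (intro set_eqI iffI)
    fix z assume "z \<in> {z \<in> Z_triv s br (Suc (Suc (Suc n))). m_map z \<in> B_coad s br (Suc (Suc n))}"
    then obtain h where z: "z \<in> T.C (Suc (Suc (Suc n)))" and z0: "T.d (Suc (Suc (Suc n))) z = 0"
      and h: "h \<in> Co.C (Suc n)" and mz: "m_map z = Co.d (Suc n) h" by (auto simp: Zt_iff Bc_Suc)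
    have hR: "h \<in> ZR s br n" unfolding ZR_iff using h z mz[symmetric] by blast
    have dh: "delta n h = z" by (rule delta_eq) (use mz T.C_len[OF z] in auto)
    have "z = delta n h + T.d (Suc (Suc n)) 0" using dh by simp
    then show "z \<in> set_plus_sp (delta n ` ZR s br n) (B_triv s br (Suc (Suc (Suc n))))"
      unfolding sp_iff Bt_Suc using hR T.zero_C by blast
  next
    fix z assume "z \<in> set_plus_sp (delta n ` ZR s br n) (B_triv s br (Suc (Suc (Suc n))))"
    then obtain h c where hR: "h \<in> ZR s br n" and c: "c \<in> T.C (Suc (Suc n))"
      and z: "z = delta n h + T.d (Suc (Suc n)) c" unfolding sp_iff Bt_Suc by blast
    have hC: "h \<in> Co.C (Suc n)" using hR by (simp add: ZR_iff)
    note D = delta_ZR[OF hR]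
    have zC: "z \<in> T.C (Suc (Suc (Suc n)))" using z T.plus_C[OF D(1) T.dC[OF c]] by simp
    have z0: "T.d (Suc (Suc (Suc n))) z = 0" using z D(2) T.dd[OF c] by (simp add: T.d_plus)
    have "m_map z = Co.d (Suc n) (h + m_map c)"
      using z D(3) m_d[OF c] by (simp add: m_plus Co.d_plus)
    moreover have "h + m_map c \<in> Co.C (Suc n)" by (rule Co.plus_C[OF hC m_C[OF c]])
    ultimately show "z \<in> {z \<in> Z_triv s br (Suc (Suc (Suc n))). m_map z \<in> B_coad s br (Suc (Suc n))}"
      using zC z0 by (auto simp: Zt_iff Bc_Suc)
  qed
qed

lemma P6: "{z \<in> Z_triv s br 1. m_map z \<in> B_coad s br 0} = B_triv s br 1"
proof -
  have B1: "B_triv s br 1 = {0}" using T.zero_C by (auto simp: One_nat_def Bt_Suc T_d0)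
  show ?thesis unfolding B1 Bc_0
  proof (intro set_eqI iffI)
    fix z assume "z \<in> {z \<in> Z_triv s br 1. m_map z \<in> {0}}"
    then have z: "z \<in> T.C 1" "m_map z = 0" by (auto simp: Zt_iff)
    have "z = 0" by (rule m_inj[OF _ z(2)]) (simp add: T.C_len[OF z(1)])
    then show "z \<in> {0}" by simp
  next
    fix z :: "'g list \<Rightarrow> 'k" assume "z \<in> {0}"
    then show "z \<in> {z \<in> Z_triv s br 1. m_map z \<in> {0}}" using T.zero_C by (simp add: Zt_iff)
  qed
qed

lemma P7: "set_plus_sp (m_map ` Z_triv s br 1) (B_coad s br 0) = Z_coad s br 0"
  unfolding One_nat_def
proof (intro set_eqI iffI)
  fix z assume "z \<in> set_plus_sp (m_map ` Z_triv s br (Suc 0)) (B_coad s br 0)"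
  then obtain c where c: "c \<in> T.C (Suc 0)" "T.d (Suc 0) c = 0" and z: "z = m_map c"
    unfolding sp_iff Bc_0 by (auto simp: Zt_iff)
  show "z \<in> Z_coad s br 0" using z c m_C[OF c(1)] m_d[OF c(1)] by (simp add: Zc_iff)
next
  fix z assume "z \<in> Z_coad s br 0"
  then have zC: "z \<in> Co.C 0" and z0: "Co.d 0 z = 0" by (auto simp: Zc_iff)
  obtain c where c: "c \<in> T.C (Suc 0)" and mc: "m_map c = z" using m_surj0[OF zC] by blast
  have "m_map (T.d (Suc 0) c) = 0" using m_d[OF c] mc z0 by simp
  then have "T.d (Suc 0) c = 0" by (intro m_inj[of "T.d (Suc 0) c"]) simp_all
  then have "c \<in> Z_triv s br (Suc 0)" using c by (simp add: Zt_iff)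
  then show "z \<in> set_plus_sp (m_map ` Z_triv s br (Suc 0)) (B_coad s br 0)"
    unfolding sp_iff Bc_0 using mc by auto
qed

end

theorem proposition2p1:
  fixes s :: "'k::field \<Rightarrow> 'g::ab_group_add \<Rightarrow> 'g" and br :: "'g \<Rightarrow> 'g \<Rightarrow> 'g"
  assumes "lie_algebra s br"
  shows "(\<exists>\<delta> :: nat \<Rightarrow> ('g list \<Rightarrow> 'g \<Rightarrow> 'k) \<Rightarrow> ('g list \<Rightarrow> 'k).
            (\<forall>n. (\<forall>x\<in>ZR s br n. \<forall>y\<in>ZR s br n. \<delta> n (x + y) = \<delta> n x + \<delta> n y)
               \<and> (\<forall>a. \<forall>x\<in>ZR s br n. \<delta> n (\<lambda>xs y. a * x xs y) = (\<lambda>xs. a * \<delta> n x xs))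
               \<and> \<delta> n ` ZR s br n \<subseteq> Z_triv s br (n + 3)
               \<and> \<delta> n ` BR s br n \<subseteq> B_triv s br (n + 3))
          \<and> {z \<in> Z_triv s br 2. m_map z \<in> B_coad s br 1} = B_triv s br 2
          \<and> (\<forall>n. {z \<in> Z_coad s br (n + 1). z \<in> BR s br n}
                 = set_plus_sp (m_map ` Z_triv s br (n + 2)) (B_coad s br (n + 1)))
          \<and> (\<forall>n. {z \<in> ZR s br n. \<delta> n z \<in> B_triv s br (n + 3)}
                 = set_plus_sp (Z_coad s br (n + 1)) (BR s br n))
          \<and> (\<forall>n. {z \<in> Z_triv s br (n + 3). m_map z \<in> B_coad s br (n + 2)}
                 = set_plus_sp (\<delta> n ` ZR s br n) (B_triv s br (n + 3))))
       \<and> {z \<in> Z_triv s br 1. m_map z \<in> B_coad s br 0} = B_triv s br 1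
       \<and> set_plus_sp (m_map ` Z_triv s br 1) (B_coad s br 0) = Z_coad s br 0"
proof -
  interpret lie_alg s br by unfold_locales (rule assms)
  show ?thesis
    apply (intro conjI exI[of _ delta] allI ballI)
    apply (simp_all only: delta_plus delta_scale P1c P1d P2 P3 P4 P5 P6 P7)
    done
qed

end
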